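(* Let $l\ge-1$ and $n\ge1$ be integers and let $(h,a)\in S_l\cap S_{l+n}$. Define $L_{(l+1)}=\phi\big(H^{(l+1)}+\sum_{k=0}^{l}a_kH^{(l-k)}\big)$ and $L_{(l+n+1)}=\phi\big(H^{(l+n+1)}+\sum_{k=0}^{l+n}a_kH^{(l+n-k)}\big)$. Then $L_{(l+1)}$ and $L_{(l+n+1)}$ are monic purely differential operators of orders $l+1$ and $l+n+1$ respectively, and the Lax operator $\mathcal L=\phi(z)$ of $h$ satisfies $\mathcal L^n=L_{(l+1)}^{-1}\,L_{(l+n+1)}$. Thus $\phi(S'_{l,l+n})$, where $S'_{l,l+n}=\mu(S_l\cap S_{l+n})$, consists of KP Lax operators whose $n$-th power is a ratio $L_{(l+1)}^{-1}L_{(l+n+1)}$ of two such differential operators (the Dickey–Krichever rational submanifold $\mathcal K_{l+1,n}$).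
   Context: Let $x$ be a space variable; all coefficients below are functions of $x$, and a subscript $x$ denotes $\partial_x$. Let $M$ be the affine space of formal Laurent series $h(z)=z+\sum_{j\ge1}h_j z^{-j}$, $A$ the affine space of formal Laurent series $a(z)=z+\sum_{j\ge0}a_j z^{-j}$, and $N=M\times A$; $\mu(h,a)=h$. The Faà di Bruno iterates of $h$ are $h^{(0)}=1$, $h^{(j+1)}=(\partial_x+h)h^{(j)}=\partial_x h^{(j)}+h\,h^{(j)}$ for all $j\in\mathbb Z$; for $j<0$ they are obtained by solving these recursions backwards from $h^{(0)}=1$, and $\{h^{(j)}\}_{j\in\mathbb Z}$ is a basis (over functions of $x$) of the algebra $L$ of formal Laurent series $\sum_{j\ge -n}k_jz^{-j}$. For $j\ge0$, the KP current $H^{(j)}$ is the unique Laurent series of the form $H^{(j)}=h^{(j)}+\sum_{l=0}^{j-2}p^j_l[h]\,h^{(l)}$, with the $p^j_l[h]$ differential polynomials in the $h_i$, such that $H^{(j)}=z^j+O(z^{-1})$. The Lax map $\phi:L\to\Psi DO$ (pseudodifferential operators in $\partial_x$) is the linear map defined by $\phi(f\,h^{(j)})=f\,\partial_x^{\,j}$ for all $j\in\mathbb Z$ and all $z$-independent functions $f$; the KP Lax operator is $\mathcal L=\phi(z)$. For an integer $l\ge-1$, $S_l\subset N$ is the set of pairs $(h,a)$ satisfying $z^l a=H^{(l+1)}+\sum_{m=0}^{l}a_mH^{(l-m)}$ (empty sum for $l=-1$). *)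

theory Defs
  imports "HOL-Computational_Algebra.Formal_Laurent_Series"
begin

text \<open>Coefficients ("functions of x") form a commutative ring of characteristic 0
 equipped with a derivation D (playing the role of the x-derivative).\<close>

definition derivation :: "('a::comm_ring_1 \<Rightarrow> 'a) \<Rightarrow> bool" where
  "derivation D \<longleftrightarrow> (\<forall>x y. D (x + y) = D x + D y) \<and> (\<forall>x y. D (x * y) = D x * y + x * D y)"

text \<open>Formal Laurent series in z with finitely many positive powers of z are encoded as
 Laurent series in w = z^{-1} (type fls): the coefficient of z^k of f is fls_nth f (-k).\<close>

definition zvar :: "'a::{zero,one} fls" where
  "zvar = fls_X_inv"

definition zcoeff :: "'a::zero fls \<Rightarrow> int \<Rightarrow> 'a" where
  "zcoeff f k = fls_nth f (-k)"

definition zpow :: "int \<Rightarrow> 'a::{zero,one} fls" where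
  "zpow k = fls_X_intpow (-k)"

definition dx :: "('a::comm_ring_1 \<Rightarrow> 'a) \<Rightarrow> 'a fls \<Rightarrow> 'a fls" where
  "dx D f = Abs_fls (\<lambda>n. D (fls_nth f n))"

definition inM :: "'a::comm_ring_1 fls \<Rightarrow> bool" where
  "inM h \<longleftrightarrow> zcoeff h 1 = 1 \<and> zcoeff h 0 = 0 \<and> (\<forall>k>1. zcoeff h k = 0)"

definition inA :: "'a::comm_ring_1 fls \<Rightarrow> bool" where
  "inA a \<longleftrightarrow> zcoeff a 1 = 1 \<and> (\<forall>k>1. zcoeff a k = 0)"

definition fdb_step :: "('a::comm_ring_1 \<Rightarrow> 'a) \<Rightarrow> 'a fls \<Rightarrow> 'a fls \<Rightarrow> 'a fls" where
  "fdb_step D h g = dx D g + h * g"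

definition fdb_back :: "('a::comm_ring_1 \<Rightarrow> 'a) \<Rightarrow> 'a fls \<Rightarrow> 'a fls \<Rightarrow> 'a fls" where
  "fdb_back D h f = (THE g. fdb_step D h g = f)"

definition fdb :: "('a::comm_ring_1 \<Rightarrow> 'a) \<Rightarrow> 'a fls \<Rightarrow> int \<Rightarrow> 'a fls" where
  "fdb D h j = (if 0 \<le> j then (fdb_step D h ^^ nat j) 1 else (fdb_back D h ^^ nat (-j)) 1)"

definition kp_current :: "('a::comm_ring_1 \<Rightarrow> 'a) \<Rightarrow> 'a fls \<Rightarrow> nat \<Rightarrow> 'a fls" where
  "kp_current D h j = (THE H. (\<exists>p :: nat \<Rightarrow> 'a.
        H = fdb D h (int j) + (\<Sum>l = 0 ..< j - 1. fls_const (p l) * fdb D h (int l)))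
      \<and> zcoeff H (int j) = 1 \<and> (\<forall>k. 0 \<le> k \<and> k \<noteq> int j \<longrightarrow> zcoeff H k = 0))"

text \<open>Pseudodifferential operators \<Sum>_{k \<le> N} f_k d^k: stored as a Laurent series whose
 coefficient at index n is the coefficient of d^(-n).\<close>
declare [[typedef_overloaded]]
datatype 'a psido = PsiDO "'a fls"

definition pcoeff :: "'a::zero psido \<Rightarrow> int \<Rightarrow> 'a" where
  "pcoeff P k = (case P of PsiDO f \<Rightarrow> fls_nth f (-k))"

definition pdeg :: "'a::zero psido \<Rightarrow> int" where
  "pdeg P = (case P of PsiDO f \<Rightarrow> - fls_subdegree f)"

definition ibinom :: "int \<Rightarrow> nat \<Rightarrow> int" where
  "ibinom i m = (if 0 \<le> i then int (nat i choose m)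
                 else (-1) ^ m * int ((nat (-i) + m - 1) choose m))"

text \<open>Composition of pseudodifferential operators:
  (f d^i)(g d^j) = \<Sum>_{m\<ge>0} binom(i,m) f D^m(g) d^(i+j-m).\<close>
definition pmul :: "('a::comm_ring_1 \<Rightarrow> 'a) \<Rightarrow> 'a psido \<Rightarrow> 'a psido \<Rightarrow> 'a psido" where
  "pmul D P Q = PsiDO (Abs_fls (\<lambda>n. let k = -n in
     (\<Sum>i \<in> {k - pdeg Q .. pdeg P}. \<Sum>j \<in> {k - i .. pdeg Q}.
        pcoeff P i * of_int (ibinom i (nat (i + j - k))) * (D ^^ nat (i + j - k)) (pcoeff Q j))))"

definition pone :: "'a::{zero,one} psido" where
  "pone = PsiDO 1"

fun ppow :: "('a::comm_ring_1 \<Rightarrow> 'a) \<Rightarrow> 'a psido \<Rightarrow> nat \<Rightarrow> 'a psido" where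
  "ppow D P 0 = pone"
| "ppow D P (Suc m) = pmul D (ppow D P m) P"

definition pinv :: "('a::comm_ring_1 \<Rightarrow> 'a) \<Rightarrow> 'a psido \<Rightarrow> 'a psido" where
  "pinv D P = (THE Q. pmul D P Q = pone \<and> pmul D Q P = pone)"

definition monic_diff :: "'a::{zero,one} psido \<Rightarrow> int \<Rightarrow> bool" where
  "monic_diff P m \<longleftrightarrow> pcoeff P m = 1 \<and> (\<forall>k. (k < 0 \<or> m < k) \<longrightarrow> pcoeff P k = 0)"

text \<open>Lax map: \<phi>(\<Sum>_j c_j h^(j)) = \<Sum>_j c_j d^j.  lax_expand rebuilds the Laurent series
 \<Sum>_j c_j h^(j) from the operator \<Sum>_j c_j d^j (h^(j) = z^j + lower order).\<close>
definition lax_expand :: "('a::comm_ring_1 \<Rightarrow> 'a) \<Rightarrow> 'a fls \<Rightarrow> 'a psido \<Rightarrow> 'a fls" where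
  "lax_expand D h P = Abs_fls (\<lambda>n. \<Sum>j \<in> {-n .. pdeg P}. pcoeff P j * (fls_nth (fdb D h j) n))"

definition lax_map :: "('a::comm_ring_1 \<Rightarrow> 'a) \<Rightarrow> 'a fls \<Rightarrow> 'a fls \<Rightarrow> 'a psido" where
  "lax_map D h f = (THE P. lax_expand D h P = f)"

definition Sseries :: "('a::comm_ring_1 \<Rightarrow> 'a) \<Rightarrow> 'a fls \<Rightarrow> 'a fls \<Rightarrow> int \<Rightarrow> 'a fls" where
  "Sseries D h a l = kp_current D h (nat (l + 1))
     + (\<Sum>m \<in> {0 .. l}. fls_const (zcoeff a (-m)) * kp_current D h (nat (l - m)))"

definition inS :: "('a::comm_ring_1 \<Rightarrow> 'a) \<Rightarrow> int \<Rightarrow> 'a fls \<Rightarrow> 'a fls \<Rightarrow> bool" where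
  "inS D l h a \<longleftrightarrow> inM h \<and> inA a \<and> zpow l * a = Sseries D h a l"

end

theory Submission
  imports Defs
begin

unbundle fps_syntax

lemma der_add: "derivation D \<Longrightarrow> D (x + y) = D x + D y"
  by (simp add: derivation_def)
lemma der_mult: "derivation D \<Longrightarrow> D (x * y) = D x * y + x * D y"
  by (simp add: derivation_def)
lemma der_0: "derivation D \<Longrightarrow> D 0 = 0"
  using der_add[of D 0 0] by simp
lemma der_uminus: "derivation D \<Longrightarrow> D (- x) = - D x"
  using der_add[of D x "-x"] der_0[of D] by (simp add: eq_neg_iff_add_eq_0 add.commute)
lemma der_diff: "derivation D \<Longrightarrow> D (x - y) = D x - D y"
  using der_add[of D x "-y"] der_uminus[of D y] by simp
lemma der_sum: "derivation D \<Longrightarrow> D (\<Sum>i\<in>A. f i) = (\<Sum>i\<in>A. D (f i))"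
  by (induction A rule: infinite_finite_induct) (auto simp: der_0 der_add)
lemma der_1: "derivation D \<Longrightarrow> D 1 = 0"
  using der_mult[of D 1 1] by simp
lemma der_of_int: "derivation D \<Longrightarrow> D (of_int c) = 0"
proof (induction c rule: int_induct[where k=0])
  case base then show ?case by (simp add: der_0)
next
  case (step1 i) then show ?case by (simp add: der_add der_1)
next
  case (step2 i) then show ?case by (simp add: der_diff der_1)
qed
lemma der_of_int_mult: "derivation D \<Longrightarrow> D (of_int c * x) = of_int c * D x"
  by (simp add: der_mult der_of_int)

definition tri :: "('a::comm_ring_1 fls \<Rightarrow> 'a fls) \<Rightarrow> int \<Rightarrow> bool" where
  "tri F s \<longleftrightarrow> (\<forall>f g. F (f + g) = F f + F g) \<and>
     (\<forall>f. f \<noteq> 0 \<longrightarrow> (\<forall>k < fls_subdegree f + s. F f $$ k = 0)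
        \<and> F f $$ (fls_subdegree f + s) = f $$ fls_subdegree f)"

lemma tri_add: "tri F s \<Longrightarrow> F (f + g) = F f + F g"
  by (simp add: tri_def)
lemma tri_zero: "tri F s \<Longrightarrow> F 0 = 0"
  using tri_add[of F s 0 0] by simp
lemma tri_diff: "tri F s \<Longrightarrow> F (f - g) = F f - F g"
  using tri_add[of F s "f - g" g] by simp
lemma tri_sum: "tri F s \<Longrightarrow> F (\<Sum>i\<in>A. f i) = (\<Sum>i\<in>A. F (f i))"
  by (induction A rule: infinite_finite_induct) (auto simp: tri_zero tri_add)
lemma tri_below: "tri F s \<Longrightarrow> f \<noteq> 0 \<Longrightarrow> k < fls_subdegree f + s \<Longrightarrow> F f $$ k = 0"
  by (simp add: tri_def)
lemma tri_lead: "tri F s \<Longrightarrow> f \<noteq> 0 \<Longrightarrow> F f $$ (fls_subdegree f + s) = f $$ fls_subdegree f"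
  by (simp add: tri_def)
lemma tri_nz: "tri F s \<Longrightarrow> f \<noteq> 0 \<Longrightarrow> F f \<noteq> 0"
  using tri_lead[of F s f] by (metis fls_nonzeroI nth_fls_subdegree_nonzero)
lemma tri_subdeg: "tri F s \<Longrightarrow> f \<noteq> 0 \<Longrightarrow> fls_subdegree (F f) = fls_subdegree f + s"
  by (rule fls_subdegree_eqI) (auto simp: tri_lead tri_below)
lemma tri_low: "tri F s \<Longrightarrow> (\<forall>k<c. f $$ k = 0) \<Longrightarrow> k < c + s \<Longrightarrow> F f $$ k = 0"
proof (cases "f = 0")
  case True
  assume "tri F s" then show ?thesis using True by (simp add: tri_zero)
next
  case False
  assume a: "tri F s" "\<forall>k<c. f $$ k = 0" "k < c + s"
  have "c \<le> fls_subdegree f" using a(2) False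
    by (meson fls_subdegree_geI)
  then show ?thesis using tri_below[OF a(1) False] a(3) by simp
qed
lemma tri_agree: "tri F s \<Longrightarrow> (\<forall>k<c. f $$ k = g $$ k) \<Longrightarrow> k < c + s \<Longrightarrow> F f $$ k = F g $$ k"
  using tri_low[of F s c "f - g" k] by (simp add: tri_diff)
lemma tri_inj: "tri F s \<Longrightarrow> F f = F g \<Longrightarrow> f = g"
  by (metis tri_nz tri_diff right_minus_eq)
lemma tri_comp:
  assumes a1: "tri F s" and a2: "tri G t"
  shows "tri (\<lambda>x. F (G x)) (s + t)"
  unfolding tri_def
proof (intro conjI allI impI)
  fix f g
  show "F (G (f + g)) = F (G f) + F (G g)" using a1 a2 by (simp add: tri_add)
next
  fix f :: "'a fls" and k assume a3: "f \<noteq> 0" and k: "k < fls_subdegree f + (s + t)"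
  have nz: "G f \<noteq> 0" using tri_nz a2 a3 by blast
  have sd: "fls_subdegree (G f) = fls_subdegree f + t" using tri_subdeg a2 a3 by blast
  show "F (G f) $$ k = 0"
    using tri_below[OF a1 nz] sd k by (simp add: add.assoc add.left_commute)
next
  fix f :: "'a fls" assume a3: "f \<noteq> 0"
  have nz: "G f \<noteq> 0" using tri_nz a2 a3 by blast
  have sd: "fls_subdegree (G f) = fls_subdegree f + t" using tri_subdeg a2 a3 by blast
  show "F (G f) $$ (fls_subdegree f + (s + t)) = f $$ fls_subdegree f"
    using tri_lead[OF a1 nz] sd tri_lead[OF a2 a3] by (simp add: ac_simps)
qed
lemma tri_id: "tri (\<lambda>x. x) 0"
  by (simp add: tri_def)
lemma tri_funpow:
  assumes a: "tri F s" shows "tri (F ^^ k) (int k * s)"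
proof (induction k)
  case 0 then show ?case using tri_id by (simp add: id_def)
next
  case (Suc k)
  have "tri (\<lambda>x. F ((F ^^ k) x)) (s + int k * s)" using tri_comp[OF a Suc.IH] .
  then show ?case by (simp add: algebra_simps comp_def)
qed
lemma tri_inv:
  assumes "tri F s" "\<And>y. F (G y) = y"
  shows "tri G (- s)"
  unfolding tri_def
proof (intro conjI allI impI)
  fix f g
  have "F (G (f + g)) = F (G f + G g)" using assms by (simp add: tri_add)
  then show "G (f + g) = G f + G g" using tri_inj[OF assms(1)] by blast
next
  fix f :: "'a fls" assume nz: "f \<noteq> 0"
  have gnz: "G f \<noteq> 0" using nz assms by (metis tri_zero)
  have sd: "fls_subdegree f = fls_subdegree (G f) + s"
    using tri_subdeg[OF assms(1) gnz] assms(2) by simp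
  have ld: "f $$ fls_subdegree f = G f $$ fls_subdegree (G f)"
    using tri_lead[OF assms(1) gnz] assms(2) sd by simp
  show "G f $$ k = 0" if "k < fls_subdegree f + - s" for k using sd that by simp
  show "G f $$ (fls_subdegree f + - s) = f $$ fls_subdegree f" using sd ld by simp
qed

definition fmono :: "int \<Rightarrow> 'a::zero \<Rightarrow> 'a fls" where
  "fmono m c = fls_shift (- m) (fls_const c)"

lemma fmono_nth: "fmono m c $$ n = (if n = m then c else 0)"
  by (simp add: fmono_def)

lemma tri_fmono: "tri F s \<Longrightarrow> i \<le> m + s \<Longrightarrow> F (fmono m c) $$ i = (if i = m + s then c else 0)"
proof (cases "c = 0")
  case True assume "tri F s" then show ?thesis using True by (simp add: fmono_def tri_zero)
next
  case False
  assume a: "tri F s" "i \<le> m + s"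
  have nz: "fmono m c \<noteq> 0" using False by (metis fls_nonzeroI fmono_nth)
  have sd: "fls_subdegree (fmono m c) = m"
    by (rule fls_subdegree_eqI) (auto simp: fmono_nth False)
  show ?thesis using tri_below[OF a(1) nz] tri_lead[OF a(1) nz] sd a(2)
    by (auto simp: fmono_nth)
qed

primrec tseq :: "('a::comm_ring_1 fls \<Rightarrow> 'a fls) \<Rightarrow> 'a fls \<Rightarrow> int \<Rightarrow> int \<Rightarrow> nat \<Rightarrow> 'a fls" where
  "tseq F y N s 0 = 0"
| "tseq F y N s (Suc k) = tseq F y N s k + fmono (N + int k) ((y - F (tseq F y N s k)) $$ (N + int k + s))"

lemma tri_surj:
  assumes tF: "tri F s"
  shows "\<exists>g. F g = y"
proof -
  define N where "N = fls_subdegree y - s"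
  let ?G = "tseq F y N s"
  have I1: "\<forall>i < N + int k + s. (y - F (?G k)) $$ i = 0" for k
  proof (induction k)
    case 0 then show ?case by (simp add: tri_zero[OF tF] N_def)
  next
    case (Suc k)
    define c where "c = (y - F (?G k)) $$ (N + int k + s)"
    have e: "y - F (?G (Suc k)) = (y - F (?G k)) - F (fmono (N + int k) c)"
      by (simp add: tri_add[OF tF] c_def)
    show ?case
    proof (intro allI impI)
      fix i assume i: "i < N + int (Suc k) + s"
      have m: "F (fmono (N + int k) c) $$ i = (if i = N + int k + s then c else 0)"
        using tri_fmono[OF tF, of i "N + int k" c] i by simp
      show "(y - F (?G (Suc k))) $$ i = 0"
        unfolding e using Suc m i c_def by (auto simp del: fls_minus_nth simp: fls_minus_nth[of "y - _"])
    qed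
  qed
  have I2: "\<forall>i < N + int k. ?G (k + j) $$ i = ?G k $$ i" for k j
    by (induction j) (auto simp: fmono_nth)
  have I3: "\<forall>i < N. ?G k $$ i = 0" for k
  proof (induction k)
    case 0 then show ?case by simp
  next
    case (Suc k) then show ?case by (simp add: fmono_nth)
  qed
  define g where "g = Abs_fls (\<lambda>i. ?G (nat (i - N) + 1) $$ i)"
  have gn: "g $$ i = ?G (nat (i - N) + 1) $$ i" for i
    unfolding g_def by (rule nth_Abs_fls_lower_bound[where N=N]) (use I3 in blast)
  have agree: "\<forall>i < N + int k. g $$ i = ?G k $$ i" for k
  proof (intro allI impI)
    fix i assume i: "i < N + int k"
    show "g $$ i = ?G k $$ i"
    proof (cases "i < N")
      case True then show ?thesis by (metis gn I3)
    next
      case False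
      define k' where "k' = nat (i - N) + 1"
      have "k' \<le> k" using i False k'_def by simp
      then obtain j where "k = k' + j" using le_Suc_ex by blast
      then show ?thesis using I2[of k' j] False k'_def gn by simp
    qed
  qed
  have "F g = y"
  proof (rule fls_eqI)
    fix i
    define k where "k = nat (i - N - s) + 1"
    have ik: "i < N + int k + s" using k_def by simp
    have "F g $$ i = F (?G k) $$ i" using tri_agree[OF tF agree ik] .
    then show "F g $$ i = y $$ i" using I1[of k] ik by simp
  qed
  then show ?thesis by blast
qed

locale kp =
  fixes D :: "'a::{comm_ring_1,ring_char_0} \<Rightarrow> 'a" and h :: "'a fls"
  assumes der: "derivation D" and hM: "inM h"
begin

lemma h_m1: "h $$ (-1) = 1" and h_0: "h $$ 0 = 0" and h_low: "k < -1 \<Longrightarrow> h $$ k = 0"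
proof -
  show "h $$ (-1) = 1" using hM by (simp add: inM_def zcoeff_def)
  show "h $$ 0 = 0" using hM by (simp add: inM_def zcoeff_def)
  assume "k < -1"
  then have "-k > 1" by simp
  then have "zcoeff h (-k) = 0" using hM unfolding inM_def by blast
  then show "h $$ k = 0" by (simp add: zcoeff_def)
qed

lemma h_nz: "h \<noteq> 0" using h_m1 by (metis fls_nonzeroI one_neq_zero)
lemma h_sub: "fls_subdegree h = -1"
  by (rule fls_subdegree_eqI) (auto simp: h_m1 h_low)

lemma dx_nth: "dx D g $$ n = D (g $$ n)"
proof -
  obtain N where N: "\<forall>n<N. g $$ n = 0" by (elim fls_nth_vanishes_belowE)
  show ?thesis unfolding dx_def
    by (rule nth_Abs_fls_lower_bound[where N=N]) (simp add: N der_0[OF der])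
qed

lemma dx_add: "dx D (f + g) = dx D f + dx D g"
  by (rule fls_eqI) (simp add: dx_nth der_add[OF der])

lemma dx_const: "dx D (fls_const c * g) = fls_const (D c) * g + fls_const c * dx D g"
  by (rule fls_eqI) (simp add: dx_nth der_mult[OF der])

lemma dx_shift: "dx D (fls_shift m g) = fls_shift m (dx D g)"
  by (rule fls_eqI) (simp add: dx_nth)

abbreviation T where "T \<equiv> fdb_step D h"

lemma T_nth: "T f $$ n = D (f $$ n) + (h * f) $$ n"
  by (simp add: fdb_step_def dx_nth)

lemma T_tri: "tri T (-1)"
  unfolding tri_def
proof (intro conjI allI impI)
  fix f g show "T (f + g) = T f + T g"
    by (simp add: fdb_step_def dx_add algebra_simps)
next
  fix f :: "'a fls" and k assume nz: "f \<noteq> 0" and k: "k < fls_subdegree f + - 1"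
  have "(h * f) $$ k = 0" by (rule fls_times_nth_eq0) (use k h_sub in simp)
  then show "T f $$ k = 0" using k by (simp add: T_nth der_0[OF der])
next
  fix f :: "'a fls" assume nz: "f \<noteq> 0"
  have "(h * f) $$ (fls_subdegree h + fls_subdegree f) = f $$ fls_subdegree f"
    using fls_times_base[of h f] h_sub h_m1 by simp
  then show "T f $$ (fls_subdegree f + - 1) = f $$ fls_subdegree f"
    using h_sub by (simp add: T_nth der_0[OF der] add.commute)
qed

lemma T_const: "T (fls_const c * g) = fls_const (D c) * g + fls_const c * T g"
  by (simp add: fdb_step_def dx_const distrib_left mult.left_commute add.assoc)

lemma T_shift: "T (fls_shift m g) = fls_shift m (T g)"
proof -
  have "h * fls_shift m g = fls_shift m (h * g)"
    by (rule fls_shifted_times_simps(1))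
  then show ?thesis by (simp add: fdb_step_def dx_shift)
qed

abbreviation Tb where "Tb \<equiv> fdb_back D h"

lemma T_Tb: "T (Tb y) = y"
proof -
  have ex: "\<exists>!g. T g = y"
    using tri_surj[OF T_tri] tri_inj[OF T_tri] by blast
  show ?thesis unfolding fdb_back_def using theI'[OF ex] .
qed

lemma Tb_tri: "tri Tb 1"
  using tri_inv[OF T_tri T_Tb] by simp

lemma Tb_T: "Tb (T g) = g"
  using tri_inj[OF T_tri] T_Tb by metis

definition Tp :: "int \<Rightarrow> 'a fls \<Rightarrow> 'a fls" where
  "Tp i g = (if 0 \<le> i then (T ^^ nat i) g else (Tb ^^ nat (-i)) g)"

lemma fdb_Tp: "fdb D h j = Tp j 1"
  by (simp add: fdb_def Tp_def)

lemma Tp_tri: "tri (Tp i) (-i)"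
proof (cases "0 \<le> i")
  case True
  have "Tp i = T ^^ nat i" using True by (auto simp: Tp_def)
  then show ?thesis using tri_funpow[OF T_tri, of "nat i"] True by simp
next
  case False
  have "Tp i = Tb ^^ nat (-i)" using False by (auto simp: Tp_def)
  then show ?thesis using tri_funpow[OF Tb_tri, of "nat (-i)"] False by simp
qed

lemma Tp_0 [simp]: "Tp 0 g = g"
  by (simp add: Tp_def)

lemma Tp_Suc: "Tp (i + 1) g = T (Tp i g)"
proof -
  consider "0 \<le> i" | "i = -1" | "i < -1" by linarith
  then show ?thesis
  proof cases
    case 1
    then have "nat (i + 1) = Suc (nat i)" by simp
    then show ?thesis using 1 by (simp add: Tp_def)
  next
    case 2 then show ?thesis by (simp add: Tp_def T_Tb)
  next
    case 3
    then have "nat (-i) = Suc (nat (-(i + 1)))" by simp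
    then have "Tp i g = Tb (Tp (i + 1) g)" using 3 by (simp add: Tp_def)
    then show ?thesis by (simp add: T_Tb)
  qed
qed

lemma Tp_pred: "T (Tp (i - 1) g) = Tp i g"
  using Tp_Suc[of "i - 1" g] by simp

lemma Tp_add: "Tp i (f + g) = Tp i f + Tp i g"
  using tri_add[OF Tp_tri] .
lemma Tp_zero [simp]: "Tp i 0 = 0"
  using tri_zero[OF Tp_tri] .
lemma Tp_low: "(\<forall>k<c. x $$ k = 0) \<Longrightarrow> k < c - i \<Longrightarrow> Tp i x $$ k = 0"
  using tri_low[OF Tp_tri, of c x k i] by simp
lemma Tp_low': "k < fls_subdegree x - i \<Longrightarrow> Tp i x $$ k = 0"
  by (rule Tp_low[of "fls_subdegree x"]) auto

lemma T_inj: "T f = T g \<Longrightarrow> f = g"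
  using tri_inj[OF T_tri] .

lemma Tp_shift: "Tp i (fls_shift m g) = fls_shift m (Tp i g)"
proof (induction i rule: int_induct[where k=0])
  case base then show ?case by simp
next
  case (step1 i) then show ?case by (simp add: Tp_Suc T_shift)
next
  case (step2 i)
  have "T (Tp (i - 1) (fls_shift m g)) = T (fls_shift m (Tp (i - 1) g))"
    by (simp add: Tp_pred T_shift step2.IH)
  then show ?case by (rule T_inj)
qed

lemma Tp_one_lead: "Tp i 1 $$ (- i) = 1"
  using tri_lead[OF Tp_tri, of 1 i] by simp
lemma Tp_one_low: "k < - i \<Longrightarrow> Tp i 1 $$ k = 0"
  using tri_below[OF Tp_tri, of 1 k i] by simp
lemma Tp_one_sub: "fls_subdegree (Tp i 1) = - i"
  using tri_subdeg[OF Tp_tri, of 1 i] by simp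

lemma Tp_one_second: "Tp (int j) 1 $$ (1 - int j) = 0"
proof (induction j)
  case 0 then show ?case by simp
next
  case (Suc j)
  define f where "f = Tp (int j) 1"
  have sf: "fls_subdegree f = - int j" by (simp add: f_def Tp_one_sub)
  have "(h * f) $$ (- int j) = (\<Sum>i = -1..0. h $$ i * f $$ (- int j - i))"
    using fls_times_nth(2)[of h f "- int j"] h_sub sf by simp
  also have "\<dots> = h $$ (-1) * f $$ (1 - int j) + h $$ 0 * f $$ (- int j)"
  proof -
    have "{-1..0::int} = {-1, 0}" by auto
    then show ?thesis by simp
  qed
  also have "\<dots> = 0" using Suc.IH by (simp add: f_def h_0)
  finally have hf: "(h * f) $$ (- int j) = 0" .
  have "Tp (int (Suc j)) 1 = T f" using Tp_Suc[of "int j" 1] by (simp add: f_def add.commute)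
  moreover have "T f $$ (- int j) = 0"
    using hf Tp_one_lead[of "int j"] by (simp add: T_nth f_def der_1[OF der])
  ultimately show ?case by simp
qed

end

lemma pcoeff_PsiDO [simp]: "pcoeff (PsiDO p) k = p $$ (- k)"
  by (simp add: pcoeff_def)
lemma pdeg_PsiDO [simp]: "pdeg (PsiDO p) = - fls_subdegree p"
  by (simp add: pdeg_def)
lemma pcoeff_above: "pdeg P < j \<Longrightarrow> pcoeff P j = 0"
  by (cases P) simp
lemma psido_eqI: "(\<And>k. pcoeff P k = pcoeff Q k) \<Longrightarrow> P = Q"
proof (cases P, cases Q)
  fix p q assume e: "\<And>k. pcoeff P k = pcoeff Q k" and P: "P = PsiDO p" and Q: "Q = PsiDO q"
  have "p = q"
  proof (rule fls_eqI)
    fix n show "p $$ n = q $$ n" using e[of "-n"] P Q by simp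
  qed
  then show "P = Q" using P Q by simp
qed
lemma pcoeff_pone: "pcoeff pone j = (if j = 0 then 1 else 0)"
  by (simp add: pone_def)

lemma ibinom_0 [simp]: "ibinom i 0 = 1"
  by (simp add: ibinom_def)
lemma ibinom_zero_left: "ibinom 0 m = (if m = 0 then 1 else 0)"
  by (simp add: ibinom_def)
lemma ibinom_pascal: "ibinom (i + 1) (Suc m) = ibinom i m + ibinom i (Suc m)"
proof -
  consider "0 \<le> i" | "i = -1" | "i \<le> -2" by linarith
  then show ?thesis
  proof cases
    case 1
    then have "nat (i + 1) = Suc (nat i)" by simp
    then show ?thesis using 1 by (simp add: ibinom_def)
  next
    case 2 then show ?thesis by (simp add: ibinom_def)
  next
    case 3
    define M where "M = nat (- i) - 2"
    have M: "nat (- i) = Suc (Suc M)" using 3 by (simp add: M_def)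
    have M1: "nat (- (i + 1)) = Suc M" using 3 by (simp add: M_def)
    have n1: "\<not> 0 \<le> i + 1" "\<not> 0 \<le> i" using 3 by auto
    have e1: "ibinom (i + 1) (Suc m) = (-1) ^ Suc m * int (Suc M + m choose Suc m)"
      unfolding ibinom_def using n1 M1 by simp
    have e2: "ibinom i m = (-1) ^ m * int (Suc M + m choose m)"
      unfolding ibinom_def using n1 M by simp
    have e3: "ibinom i (Suc m) = (-1) ^ Suc m * int (Suc (Suc M + m) choose Suc m)"
      unfolding ibinom_def using n1 M by simp
    have b: "int (Suc (Suc M + m) choose Suc m) = int (Suc M + m choose m) + int (Suc M + m choose Suc m)"
      by simp
    show ?thesis unfolding e1 e2 e3 b by (simp add: algebra_simps)
  qed
qed

lemma sum_shift_int: "(\<Sum>j\<in>{a..b::int}. f (j - 1)) = (\<Sum>j\<in>{a - 1..b - 1}. f j)"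
  by (rule sum.reindex_bij_witness[of _ "\<lambda>j. j + 1" "\<lambda>j. j - 1"]) auto

context kp
begin

definition act :: "'a psido \<Rightarrow> 'a fls \<Rightarrow> 'a fls" where
  "act P g = Abs_fls (\<lambda>n. \<Sum>j\<in>{fls_subdegree g - n .. pdeg P}. pcoeff P j * (Tp j g $$ n))"

lemma act_nth_def: "act P g $$ n = (\<Sum>j\<in>{fls_subdegree g - n .. pdeg P}. pcoeff P j * (Tp j g $$ n))"
  unfolding act_def
  by (rule nth_Abs_fls_lower_bound[where N="fls_subdegree g - pdeg P"]) auto

lemma lax_expand_act: "lax_expand D h P = act P 1"
  by (simp add: lax_expand_def act_def fdb_Tp)

lemma act_term_zero: "j \<notin> {fls_subdegree g - n .. pdeg P} \<Longrightarrow> pcoeff P j * (Tp j g $$ n) = 0"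
  by (auto simp: pcoeff_above Tp_low')

lemma act_nth_sum:
  assumes "finite J" "\<And>j. j \<notin> J \<Longrightarrow> pcoeff P j * (Tp j g $$ n) = 0"
  shows "act P g $$ n = (\<Sum>j\<in>J. pcoeff P j * (Tp j g $$ n))"
proof -
  let ?J0 = "{fls_subdegree g - n .. pdeg P}"
  let ?f = "\<lambda>j. pcoeff P j * (Tp j g $$ n)"
  have "sum ?f ?J0 = sum ?f (?J0 \<union> J)"
    by (rule sum.mono_neutral_left) (use assms act_term_zero in auto)
  also have "\<dots> = sum ?f J"
    by (rule sum.mono_neutral_right) (use assms in auto)
  finally show ?thesis by (simp add: act_nth_def)
qed

lemma act_nth_box':
  assumes "a \<le> fls_subdegree g - n" "\<And>j. b < j \<Longrightarrow> pcoeff P j = 0"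
  shows "act P g $$ n = (\<Sum>j\<in>{a..b}. pcoeff P j * (Tp j g $$ n))"
proof (rule act_nth_sum)
  fix j assume "j \<notin> {a..b}"
  then have "j < a \<or> b < j" by auto
  then show "pcoeff P j * (Tp j g $$ n) = 0"
  proof
    assume "j < a" then have "Tp j g $$ n = 0" using assms by (intro Tp_low') simp
    then show ?thesis by simp
  next
    assume "b < j" then have "pcoeff P j = 0" using assms by simp
    then show ?thesis by simp
  qed
qed simp

lemma act_nth_box:
  assumes "a \<le> fls_subdegree g - n" "pdeg P \<le> b"
  shows "act P g $$ n = (\<Sum>j\<in>{a..b}. pcoeff P j * (Tp j g $$ n))"
proof (rule act_nth_sum)
  fix j assume "j \<notin> {a..b}"
  then have "j < a \<or> b < j" by auto
  then show "pcoeff P j * (Tp j g $$ n) = 0"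
  proof
    assume "j < a" then have "Tp j g $$ n = 0" using assms by (intro Tp_low') simp
    then show ?thesis by simp
  next
    assume "b < j" then have "pcoeff P j = 0" using assms by (intro pcoeff_above) simp
    then show ?thesis by simp
  qed
qed simp

lemma act_low_gen:
  assumes "\<forall>k<c. g $$ k = 0" "\<forall>j>b. pcoeff P j = 0" "k < c - b"
  shows "act P g $$ k = 0"
proof -
  have "act P g $$ k = (\<Sum>j\<in>{}. pcoeff P j * (Tp j g $$ k))"
  proof (rule act_nth_sum)
    fix j
    show "pcoeff P j * (Tp j g $$ k) = 0"
    proof (cases "j > b")
      case True then show ?thesis using assms by simp
    next
      case False then have "Tp j g $$ k = 0" using Tp_low[of c g k j] assms by simp
      then show ?thesis by simp
    qed
  qed simp
  then show ?thesis by simp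
qed

lemma act_add_g: "act P (f + g) = act P f + act P g"
proof (rule fls_eqI)
  fix n
  define m where "m = min (fls_subdegree f) (fls_subdegree g)"
  let ?J = "{m - n .. pdeg P}"
  have lowf: "\<forall>k<m. f $$ k = 0" and lowg: "\<forall>k<m. g $$ k = 0" by (auto simp: m_def)
  have lowfg: "\<forall>k<m. (f + g) $$ k = 0" using lowf lowg by simp
  have z: "pcoeff P j * (Tp j x $$ n) = 0" if "j \<notin> ?J" "\<forall>k<m. x $$ k = 0" for j x
    using that Tp_low[of m x n j] pcoeff_above[of P j] by auto
  have "act P (f + g) $$ n = (\<Sum>j\<in>?J. pcoeff P j * (Tp j (f + g) $$ n))"
    by (rule act_nth_sum) (use z lowfg in auto)
  moreover have "act P f $$ n = (\<Sum>j\<in>?J. pcoeff P j * (Tp j f $$ n))"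
    by (rule act_nth_sum) (use z lowf in auto)
  moreover have "act P g $$ n = (\<Sum>j\<in>?J. pcoeff P j * (Tp j g $$ n))"
    by (rule act_nth_sum) (use z lowg in auto)
  ultimately show "act P (f + g) $$ n = (act P f + act P g) $$ n"
    by (simp add: Tp_add distrib_left sum.distrib)
qed

lemma act_zero_g [simp]: "act P 0 = 0"
  using act_add_g[of P 0 0] by simp

lemma act_addP: "act (PsiDO (p + q)) g = act (PsiDO p) g + act (PsiDO q) g"
proof (rule fls_eqI)
  fix n
  define B where "B = max (max (pdeg (PsiDO p)) (pdeg (PsiDO q))) (pdeg (PsiDO (p + q)))"
  let ?J = "{fls_subdegree g - n .. B}"
  have "act (PsiDO (p + q)) g $$ n = (\<Sum>j\<in>?J. pcoeff (PsiDO (p + q)) j * (Tp j g $$ n))"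
    by (rule act_nth_box) (auto simp: B_def simp del: pdeg_PsiDO)
  moreover have "act (PsiDO p) g $$ n = (\<Sum>j\<in>?J. pcoeff (PsiDO p) j * (Tp j g $$ n))"
    by (rule act_nth_box) (auto simp: B_def simp del: pdeg_PsiDO)
  moreover have "act (PsiDO q) g $$ n = (\<Sum>j\<in>?J. pcoeff (PsiDO q) j * (Tp j g $$ n))"
    by (rule act_nth_box) (auto simp: B_def simp del: pdeg_PsiDO)
  ultimately show "act (PsiDO (p + q)) g $$ n = (act (PsiDO p) g + act (PsiDO q) g) $$ n"
    by (simp add: distrib_right sum.distrib)
qed

lemma act_zeroP [simp]: "act (PsiDO 0) g = 0"
  using act_addP[of 0 0 g] by simp

lemma act_constP: "act (PsiDO (fls_const c * p)) g = fls_const c * act (PsiDO p) g"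
proof (rule fls_eqI)
  fix n
  define B where "B = max (pdeg (PsiDO p)) (pdeg (PsiDO (fls_const c * p)))"
  let ?J = "{fls_subdegree g - n .. B}"
  have "act (PsiDO (fls_const c * p)) g $$ n = (\<Sum>j\<in>?J. pcoeff (PsiDO (fls_const c * p)) j * (Tp j g $$ n))"
    by (rule act_nth_box) (auto simp: B_def simp del: pdeg_PsiDO)
  moreover have "act (PsiDO p) g $$ n = (\<Sum>j\<in>?J. pcoeff (PsiDO p) j * (Tp j g $$ n))"
    by (rule act_nth_box) (auto simp: B_def simp del: pdeg_PsiDO)
  ultimately show "act (PsiDO (fls_const c * p)) g $$ n = (fls_const c * act (PsiDO p) g) $$ n"
    by (simp add: sum_distrib_left mult.assoc)
qed

lemma act_sumP: "act (PsiDO (\<Sum>m\<in>M. f m)) g = (\<Sum>m\<in>M. act (PsiDO (f m)) g)"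
  by (induction M rule: infinite_finite_induct) (auto simp: act_addP)

lemma act_shift: "act P (fls_shift m g) = fls_shift m (act P g)"
proof (rule fls_eqI)
  fix n
  let ?J = "{fls_subdegree g - (n + m) .. pdeg P}"
  have "act P (fls_shift m g) $$ n = (\<Sum>j\<in>?J. pcoeff P j * (Tp j (fls_shift m g) $$ n))"
    by (rule act_nth_sum) (auto simp: Tp_shift pcoeff_above Tp_low')
  also have "\<dots> = (\<Sum>j\<in>?J. pcoeff P j * (Tp j g $$ (n + m)))"
    by (simp add: Tp_shift)
  also have "\<dots> = act P g $$ (n + m)" by (simp add: act_nth_def)
  finally show "act P (fls_shift m g) $$ n = fls_shift m (act P g) $$ n" by simp
qed

lemma act_pone: "act pone g = g"
proof (rule fls_eqI)
  fix n
  have "act pone g $$ n = (\<Sum>j\<in>{0}. pcoeff pone j * (Tp j g $$ n))"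
    by (rule act_nth_sum) (auto simp: pcoeff_pone)
  then show "act pone g $$ n = g $$ n" by (simp add: pcoeff_pone)
qed

end

context kp
begin

definition dop :: "'a psido \<Rightarrow> 'a psido" where
  "dop R = PsiDO (Abs_fls (\<lambda>n. D (pcoeff R (- n)) + pcoeff R (- n - 1)))"

lemma pcoeff_dop: "pcoeff (dop R) j = D (pcoeff R j) + pcoeff R (j - 1)"
proof -
  have "Abs_fls (\<lambda>n. D (pcoeff R (- n)) + pcoeff R (- n - 1)) $$ (- j)
        = D (pcoeff R (- (- j))) + pcoeff R (- (- j) - 1)"
    by (rule nth_Abs_fls_lower_bound[where N="- pdeg R - 1"])
       (auto simp: pcoeff_above der_0[OF der])
  then show ?thesis by (simp add: dop_def)
qed

lemma T_act: "T (act R g) = act (dop R) g"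
proof (rule fls_eqI)
  fix n
  define A where "A = fls_subdegree g - n - 2"
  define B where "B = pdeg R + 1"
  let ?K = "{A..B}"
  let ?X = "\<lambda>j. Tp j g $$ n"
  define S where "S = (\<Sum>j\<in>?K. fls_const (pcoeff R j) * Tp j g)"
  have agree: "\<forall>k < n + 2. act R g $$ k = S $$ k"
  proof (intro allI impI)
    fix k assume k: "k < n + 2"
    have "act R g $$ k = (\<Sum>j\<in>?K. pcoeff R j * (Tp j g $$ k))"
      by (rule act_nth_box) (use k in \<open>auto simp: A_def B_def\<close>)
    then show "act R g $$ k = S $$ k" by (simp add: S_def fls_nth_sum)
  qed
  have "T (act R g) $$ n = T S $$ n"
    using tri_agree[OF T_tri agree] by simp
  also have "T S = (\<Sum>j\<in>?K. fls_const (D (pcoeff R j)) * Tp j g + fls_const (pcoeff R j) * Tp (j + 1) g)"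
    by (simp add: S_def tri_sum[OF T_tri] T_const Tp_Suc)
  also have "\<dots> $$ n = (\<Sum>j\<in>?K. D (pcoeff R j) * ?X j) + (\<Sum>j\<in>?K. pcoeff R j * ?X (j + 1))"
    by (simp add: fls_nth_sum sum.distrib)
  also have "(\<Sum>j\<in>?K. pcoeff R j * ?X (j + 1)) = (\<Sum>j\<in>?K. pcoeff R (j - 1) * ?X j)"
  proof -
    let ?F = "\<lambda>j. pcoeff R j * ?X (j + 1)"
    have "(\<Sum>j\<in>?K. pcoeff R (j - 1) * ?X j) = (\<Sum>j\<in>?K. ?F (j - 1))" by simp
    also have "\<dots> = (\<Sum>j\<in>{A - 1..B - 1}. ?F j)" by (rule sum_shift_int)
    also have "\<dots> = (\<Sum>j\<in>{A - 1..B}. ?F j)"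
    proof (rule sum.mono_neutral_left)
      show "\<forall>i\<in>{A - 1..B} - {A - 1..B - 1}. ?F i = 0"
        by (auto simp: B_def pcoeff_above)
    qed auto
    also have "\<dots> = (\<Sum>j\<in>?K. ?F j)"
    proof (rule sum.mono_neutral_right)
      show "\<forall>i\<in>{A - 1..B} - ?K. ?F i = 0"
        by (auto simp: A_def Tp_low')
    qed auto
    finally show ?thesis by simp
  qed
  also have "(\<Sum>j\<in>?K. D (pcoeff R j) * ?X j) + (\<Sum>j\<in>?K. pcoeff R (j - 1) * ?X j)
      = (\<Sum>j\<in>?K. pcoeff (dop R) j * ?X j)"
    by (simp add: pcoeff_dop distrib_right sum.distrib)
  also have "\<dots> = act (dop R) g $$ n"
  proof (rule act_nth_box'[symmetric])
    show "A \<le> fls_subdegree g - n" by (simp add: A_def)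
    show "pcoeff (dop R) j = 0" if "B < j" for j
      using that by (simp add: pcoeff_dop pcoeff_above B_def der_0[OF der])
  qed
  finally show "T (act R g) $$ n = act (dop R) g $$ n" .
qed

definition qc :: "int \<Rightarrow> 'a psido \<Rightarrow> int \<Rightarrow> 'a" where
  "qc i Q k = (\<Sum>j\<in>{k - i .. pdeg Q}. of_int (ibinom i (nat (i + j - k))) * (D ^^ nat (i + j - k)) (pcoeff Q j))"

definition qop :: "int \<Rightarrow> 'a psido \<Rightarrow> 'a psido" where
  "qop i Q = PsiDO (Abs_fls (\<lambda>n. qc i Q (- n)))"

lemma qc_above: "i + pdeg Q < k \<Longrightarrow> qc i Q k = 0"
  by (simp add: qc_def)

lemma pcoeff_qop: "pcoeff (qop i Q) k = qc i Q k"
proof -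
  have "Abs_fls (\<lambda>n. qc i Q (- n)) $$ (- k) = qc i Q (- (- k))"
    by (rule nth_Abs_fls_lower_bound[where N="- (i + pdeg Q)"]) (auto simp: qc_above)
  then show ?thesis by (simp add: qop_def)
qed

lemma qop_0: "qop 0 Q = Q"
proof (rule psido_eqI)
  fix k
  show "pcoeff (qop 0 Q) k = pcoeff Q k"
  proof (cases "k \<le> pdeg Q")
    case True
    have "qc 0 Q k = (\<Sum>j\<in>{k}. of_int (ibinom 0 (nat (0 + j - k))) * (D ^^ nat (0 + j - k)) (pcoeff Q j))"
      unfolding qc_def
      by (rule sum.mono_neutral_right) (use True in \<open>auto simp: ibinom_zero_left\<close>)
    then show ?thesis by (simp add: pcoeff_qop)
  next
    case False
    then show ?thesis by (simp add: pcoeff_qop qc_above pcoeff_above)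
  qed
qed

lemma D_funpow: "D ((D ^^ m) x) = (D ^^ Suc m) x"
  by simp

lemma dop_qop: "dop (qop i Q) = qop (i + 1) Q"
proof (rule psido_eqI)
  fix k
  define a where "a = k - i"
  define dQ where "dQ = pdeg Q"
  let ?q = "pcoeff Q"
  have qc1: "qc i Q k = (\<Sum>j\<in>{a..dQ}. of_int (ibinom i (nat (j - a))) * (D ^^ nat (j - a)) (?q j))"
    by (simp add: qc_def a_def dQ_def algebra_simps)
  have qc2: "qc i Q (k - 1) = (\<Sum>j\<in>{a - 1..dQ}. of_int (ibinom i (nat (j - a + 1))) * (D ^^ nat (j - a + 1)) (?q j))"
    unfolding qc_def a_def dQ_def by (rule sum.cong) (auto simp: algebra_simps)
  have qc3: "qc (i + 1) Q k = (\<Sum>j\<in>{a - 1..dQ}. of_int (ibinom (i + 1) (nat (j - a + 1))) * (D ^^ nat (j - a + 1)) (?q j))"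
    unfolding qc_def a_def dQ_def by (rule sum.cong) (auto simp: algebra_simps)
  have Dqc1: "D (qc i Q k) = (\<Sum>j\<in>{a..dQ}. of_int (ibinom i (nat (j - a))) * (D ^^ Suc (nat (j - a))) (?q j))"
    unfolding qc1 by (simp add: der_sum[OF der] der_of_int_mult[OF der] D_funpow del: funpow.simps)
  show "pcoeff (dop (qop i Q)) k = pcoeff (qop (i + 1) Q) k"
  proof (cases "a - 1 \<le> dQ")
    case False
    then show ?thesis
      by (simp add: pcoeff_dop pcoeff_qop Dqc1 qc2 qc3 der_0[OF der])
  next
    case True
    have ins: "{a - 1..dQ} = insert (a - 1) {a..dQ}" using True by auto
    have nin: "a - 1 \<notin> {a..dQ}" by simp
    have s2: "qc i Q (k - 1) = ?q (a - 1) + (\<Sum>j\<in>{a..dQ}. of_int (ibinom i (Suc (nat (j - a)))) * (D ^^ Suc (nat (j - a))) (?q j))"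
      unfolding qc2 ins sum.insert[OF finite_atLeastAtMost nin]
      by (simp del: funpow.simps) (rule sum.cong, auto simp: Suc_nat_eq_nat_zadd1 add.commute)
    have s3: "qc (i + 1) Q k = ?q (a - 1) + (\<Sum>j\<in>{a..dQ}. of_int (ibinom (i + 1) (Suc (nat (j - a)))) * (D ^^ Suc (nat (j - a))) (?q j))"
      unfolding qc3 ins sum.insert[OF finite_atLeastAtMost nin]
      by (simp del: funpow.simps) (rule sum.cong, auto simp: Suc_nat_eq_nat_zadd1 add.commute)
    show ?thesis
      unfolding pcoeff_dop pcoeff_qop s2 s3 Dqc1
      by (simp add: ibinom_pascal distrib_right sum.distrib del: funpow.simps)
  qed
qed

lemma Tp_act: "Tp i (act Q g) = act (qop i Q) g"
proof (induction i rule: int_induct[where k=0])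
  case base then show ?case by (simp add: qop_0)
next
  case (step1 i) then show ?case by (simp add: Tp_Suc T_act dop_qop)
next
  case (step2 i)
  have "T (Tp (i - 1) (act Q g)) = T (act (qop (i - 1) Q) g)"
    by (simp add: Tp_pred step2.IH T_act dop_qop)
  then show ?case by (rule T_inj)
qed

end

context kp
begin

lemma pcoeff_pmul: "pcoeff (pmul D P Q) k = (\<Sum>i\<in>{k - pdeg Q .. pdeg P}. pcoeff P i * qc i Q k)"
proof -
  let ?f = "\<lambda>n. let k = - n in (\<Sum>i \<in> {k - pdeg Q .. pdeg P}. \<Sum>j \<in> {k - i .. pdeg Q}.
        pcoeff P i * of_int (ibinom i (nat (i + j - k))) * (D ^^ nat (i + j - k)) (pcoeff Q j))"
  have "Abs_fls ?f $$ (- k) = ?f (- k)"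
    by (rule nth_Abs_fls_lower_bound[where N="- (pdeg P + pdeg Q)"]) (auto simp: Let_def)
  then show ?thesis
    by (simp add: pmul_def Let_def qc_def sum_distrib_left mult.assoc)
qed

lemma act_low: "k < fls_subdegree g - pdeg P \<Longrightarrow> act P g $$ k = 0"
  by (simp add: act_nth_def)

lemma act_pmul: "act (pmul D P Q) g = act P (act Q g)"
proof (rule fls_eqI)
  fix n
  define a0 where "a0 = fls_subdegree g - n"
  define dP where "dP = pdeg P"
  define dQ where "dQ = pdeg Q"
  let ?I = "{a0 - dQ .. dP}"
  let ?K = "{a0 .. dP + dQ}"
  let ?X = "\<lambda>k. Tp k g $$ n"
  let ?v = "act Q g"
  have vlow: "\<forall>k < fls_subdegree g - dQ. ?v $$ k = 0" by (simp add: act_low dQ_def)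
  have "act P ?v $$ n = (\<Sum>i\<in>?I. pcoeff P i * (Tp i ?v $$ n))"
  proof (rule act_nth_sum)
    fix i assume i: "i \<notin> ?I"
    show "pcoeff P i * (Tp i ?v $$ n) = 0"
    proof (cases "i > dP")
      case True then show ?thesis by (simp add: pcoeff_above dP_def)
    next
      case False
      then have "i < a0 - dQ" using i by auto
      then have "Tp i ?v $$ n = 0" using Tp_low[OF vlow] by (simp add: a0_def)
      then show ?thesis by simp
    qed
  qed simp
  also have "\<dots> = (\<Sum>i\<in>?I. pcoeff P i * (\<Sum>k\<in>?K. qc i Q k * ?X k))"
  proof (rule sum.cong)
    fix i assume i: "i \<in> ?I"
    have "Tp i ?v $$ n = act (qop i Q) g $$ n" by (simp add: Tp_act)
    also have "\<dots> = (\<Sum>k\<in>?K. pcoeff (qop i Q) k * ?X k)"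
      by (rule act_nth_box') (use i in \<open>auto simp: a0_def pcoeff_qop qc_above dQ_def\<close>)
    finally show "pcoeff P i * (Tp i ?v $$ n) = pcoeff P i * (\<Sum>k\<in>?K. qc i Q k * ?X k)"
      by (simp add: pcoeff_qop)
  qed simp
  also have "\<dots> = (\<Sum>k\<in>?K. (\<Sum>i\<in>?I. pcoeff P i * qc i Q k) * ?X k)"
    by (simp add: sum_distrib_left sum_distrib_right mult.assoc sum.swap[of _ ?I])
  also have "\<dots> = (\<Sum>k\<in>?K. pcoeff (pmul D P Q) k * ?X k)"
  proof (rule sum.cong)
    fix k assume k: "k \<in> ?K"
    have "(\<Sum>i\<in>{k - dQ .. dP}. pcoeff P i * qc i Q k) = (\<Sum>i\<in>?I. pcoeff P i * qc i Q k)"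
      by (rule sum.mono_neutral_left) (use k in \<open>auto simp: qc_above dQ_def\<close>)
    then show "(\<Sum>i\<in>?I. pcoeff P i * qc i Q k) * ?X k = pcoeff (pmul D P Q) k * ?X k"
      by (simp add: pcoeff_pmul dP_def dQ_def)
  qed simp
  also have "\<dots> = act (pmul D P Q) g $$ n"
    by (rule act_nth_box'[symmetric]) (auto simp: a0_def pcoeff_pmul dP_def dQ_def)
  finally show "act (pmul D P Q) g $$ n = act P (act Q g) $$ n" by simp
qed

end

definition Kf :: "nat \<Rightarrow> (nat \<Rightarrow> 'a::comm_ring_1) \<Rightarrow> 'a fls" where
  "Kf j p = fls_shift (int j) 1 + (\<Sum>l\<in>{0..<j - 1}. fls_const (p l) * fls_shift (int l) 1)"

lemma Kf_nth: "Kf j p $$ n = (if n = - int j then 1 else 0) + (\<Sum>l\<in>{0..<j - 1}. if n = - int l then p l else 0)"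
  unfolding Kf_def by (auto simp: fls_nth_sum intro!: sum.cong)

lemma Kf_pos: "0 < n \<Longrightarrow> Kf j p $$ n = 0"
  by (simp add: Kf_nth)
lemma Kf_low: "n < - int j \<Longrightarrow> Kf j p $$ n = 0"
  by (auto simp: Kf_nth intro!: sum.neutral)
lemma Kf_lead: "Kf j p $$ (- int j) = 1"
  by (auto simp: Kf_nth intro!: sum.neutral)

context kp
begin

lemma act_mono1: "act (PsiDO (fls_shift m 1)) 1 = Tp m 1"
proof (rule fls_eqI)
  fix n
  have "act (PsiDO (fls_shift m 1)) 1 $$ n = (\<Sum>i\<in>{m}. pcoeff (PsiDO (fls_shift m 1)) i * (Tp i 1 $$ n))"
    by (rule act_nth_sum) auto
  then show "act (PsiDO (fls_shift m 1)) 1 $$ n = Tp m 1 $$ n" by simp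
qed

lemma act_Kf: "act (PsiDO (Kf j p)) 1 = fdb D h (int j) + (\<Sum>l\<in>{0..<j - 1}. fls_const (p l) * fdb D h (int l))"
  by (simp add: Kf_def act_addP act_sumP act_constP act_mono1 fdb_Tp)

abbreviation F where "F \<equiv> \<lambda>p. act (PsiDO p) 1"

lemma F_tri: "tri F 0"
  unfolding tri_def
proof (intro conjI allI impI)
  fix f g show "F (f + g) = F f + F g" by (rule act_addP)
next
  fix p :: "'a fls" and k assume "p \<noteq> 0" "k < fls_subdegree p + 0"
  then show "F p $$ k = 0" by (intro act_low) simp
next
  fix p :: "'a fls" assume nz: "p \<noteq> 0"
  define d where "d = fls_subdegree p"
  have "F p $$ d = (\<Sum>j\<in>{-d}. pcoeff (PsiDO p) j * (Tp j 1 $$ d))"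
  proof (rule act_nth_sum)
    fix j assume "j \<notin> {-d}"
    then have "j < -d \<or> -d < j" by auto
    then show "pcoeff (PsiDO p) j * (Tp j 1 $$ d) = 0"
    proof
      assume "j < -d" then show ?thesis by (simp add: Tp_one_low)
    next
      assume "-d < j" then show ?thesis by (simp add: d_def)
    qed
  qed simp
  also have "\<dots> = p $$ d" using Tp_one_lead[of "-d"] by simp
  finally show "F p $$ (fls_subdegree p + 0) = p $$ fls_subdegree p" by (simp add: d_def)
qed

lemma act1_inj: "act P 1 = act Q 1 \<Longrightarrow> P = Q"
  by (cases P; cases Q) (use tri_inj[OF F_tri] in auto)

lemma lax_map_eq: "act P 1 = f \<Longrightarrow> lax_map D h f = P"
  unfolding lax_map_def lax_expand_act
  by (rule the_equality) (auto intro: act1_inj)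

lemma lax_map_act: "act (lax_map D h f) 1 = f"
proof -
  obtain p where p: "F p = f" using tri_surj[OF F_tri] by blast
  then have "lax_map D h f = PsiDO p" by (rule lax_map_eq)
  then show ?thesis using p by simp
qed

lemma F_nonpos_zero:
  assumes "\<And>n. 0 < n \<Longrightarrow> y $$ n = 0" "\<And>k. k \<le> 0 \<Longrightarrow> F y $$ k = 0"
  shows "y = 0"
proof (rule ccontr)
  assume nz: "y \<noteq> 0"
  have "fls_subdegree y \<le> 0"
    using nz assms(1) by (metis fls_subdegree_leI linorder_not_less nth_fls_subdegree_nonzero)
  then have "F y $$ (fls_subdegree y + 0) = 0" using assms(2) by simp
  then show False using tri_lead[OF F_tri nz] nz by simp
qed

lemma F_pos:
  assumes "\<And>n. n \<le> 0 \<Longrightarrow> y $$ n = 0" "k \<le> 0"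
  shows "F y $$ k = 0"
proof -
  have "F y $$ k = (\<Sum>i\<in>{}. pcoeff (PsiDO y) i * (Tp i 1 $$ k))"
  proof (rule act_nth_sum)
    fix i
    show "pcoeff (PsiDO y) i * (Tp i 1 $$ k) = 0"
    proof (cases "0 \<le> i")
      case True then show ?thesis using assms(1)[of "-i"] by simp
    next
      case False then show ?thesis using assms(2) by (simp add: Tp_one_low)
    qed
  qed simp
  then show ?thesis by simp
qed

lemma kp_repr:
  "\<exists>x. kp_current D h j = act (PsiDO x) 1 \<and> x $$ (- int j) = 1 \<and> (\<forall>n. (0 < n \<or> n < - int j) \<longrightarrow> x $$ n = 0)"
proof -
  define z :: "'a fls" where "z = fls_shift (int j) 1"
  obtain r where R: "lax_map D h z = PsiDO r" by (cases "lax_map D h z") simp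
  have Fr: "F r = z" using lax_map_act[of z] R by simp
  have znz: "z \<noteq> 0" by (simp add: z_def fls_shift_eq0_iff)
  have rnz: "r \<noteq> 0" using Fr znz tri_zero[OF F_tri] by auto
  have subr: "fls_subdegree r = - int j"
    using tri_subdeg[OF F_tri rnz] Fr by (simp add: z_def)
  have r_lead: "r $$ (- int j) = 1"
    using tri_lead[OF F_tri rnz] Fr subr by (simp add: z_def)
  have r_low: "r $$ n = 0" if "n < - int j" for n using that subr by simp
  have r_second: "r $$ (1 - int j) = 0" if "1 \<le> j"
  proof -
    have "F r $$ (1 - int j) = (\<Sum>i\<in>{int j - 1, int j}. pcoeff (PsiDO r) i * (Tp i 1 $$ (1 - int j)))"
    proof (rule act_nth_sum)
      fix i assume "i \<notin> {int j - 1, int j}"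
      then have "i < int j - 1 \<or> int j < i" by auto
      then show "pcoeff (PsiDO r) i * (Tp i 1 $$ (1 - int j)) = 0"
      proof
        assume "i < int j - 1" then show ?thesis by (simp add: Tp_one_low)
      next
        assume "int j < i" then show ?thesis using r_low by simp
      qed
    qed simp
    also have "\<dots> = r $$ (1 - int j) * (Tp (int j - 1) 1 $$ (1 - int j)) + r $$ (- int j) * (Tp (int j) 1 $$ (1 - int j))"
      by simp
    also have "\<dots> = r $$ (1 - int j)"
      using Tp_one_lead[of "int j - 1"] Tp_one_second[of j] r_lead by simp
    finally show ?thesis using Fr by (simp add: z_def)
  qed
  define p where "p = (\<lambda>l. r $$ (- int l))"
  define x where "x = Kf j p"
  have xr: "x $$ n = r $$ n" if n0: "n \<le> 0" for n
  proof -
    consider "n = - int j" | "n < - int j" | "n = 1 - int j" "1 \<le> j" | "1 - int j < n"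
      using n0 by linarith
    then show ?thesis
    proof cases
      case 1 then show ?thesis by (simp add: x_def Kf_lead r_lead)
    next
      case 2 then show ?thesis by (simp add: x_def Kf_low r_low)
    next
      case 3
      have "x $$ n = 0" using 3 by (auto simp: x_def Kf_nth intro!: sum.neutral)
      then show ?thesis using 3 r_second by simp
    next
      case 4
      define l0 where "l0 = nat (- n)"
      have l0: "n = - int l0" "l0 < j - 1" using 4 n0 by (auto simp: l0_def)
      have "x $$ n = (\<Sum>l\<in>{0..<j - 1}. if l = l0 then p l else 0)"
        using l0 by (auto simp: x_def Kf_nth intro!: sum.cong)
      also have "\<dots> = p l0" using l0 by simp
      finally show ?thesis using l0 by (simp add: p_def)
    qed
  qed
  have Fx: "F x $$ k = z $$ k" if "k \<le> 0" for k
  proof -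
    have "F x = F r - F (r - x)" by (simp add: tri_diff[OF F_tri])
    moreover have "F (r - x) $$ k = 0" by (rule F_pos) (use xr that in auto)
    ultimately show ?thesis using Fr by simp
  qed
  have props: "(\<exists>p. H = fdb D h (int j) + (\<Sum>l = 0 ..< j - 1. fls_const (p l) * fdb D h (int l)))
      \<and> zcoeff H (int j) = 1 \<and> (\<forall>k. 0 \<le> k \<and> k \<noteq> int j \<longrightarrow> zcoeff H k = 0)
      \<longleftrightarrow> (\<exists>p. H = F (Kf j p)) \<and> (\<forall>k\<le>0. H $$ k = z $$ k)" for H
  proof -
    have "(\<forall>k\<le>0. H $$ k = z $$ k) \<longleftrightarrow> zcoeff H (int j) = 1 \<and> (\<forall>k. 0 \<le> k \<and> k \<noteq> int j \<longrightarrow> zcoeff H k = 0)"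
      unfolding zcoeff_def z_def
    proof safe
      fix k :: int assume a: "\<forall>k\<le>0. H $$ k = fls_shift (int j) 1 $$ k" "0 \<le> k" "k \<noteq> int j"
      have "H $$ (- k) = fls_shift (int j) 1 $$ (- k)" using a(1) a(2) by simp
      then show "H $$ - k = 0" using a(3) by simp
    next
      assume "\<forall>k\<le>0. H $$ k = fls_shift (int j) 1 $$ k"
      then show "H $$ - int j = 1" by simp
    next
      fix k :: int assume a: "H $$ - int j = 1" "\<forall>k. 0 \<le> k \<and> k \<noteq> int j \<longrightarrow> H $$ - k = 0" "k \<le> 0"
      show "H $$ k = fls_shift (int j) 1 $$ k"
      proof (cases "k = - int j")
        case True then show ?thesis using a by simp
      next
        case False then show ?thesis using a(2)[rule_format, of "-k"] a(3) by auto
      qed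
    qed
    then show ?thesis by (simp add: act_Kf)
  qed
  have "kp_current D h j = F x"
    unfolding kp_current_def props
  proof (rule the_equality)
    show "(\<exists>p. F x = F (Kf j p)) \<and> (\<forall>k\<le>0. F x $$ k = z $$ k)"
      using Fx x_def by blast
  next
    fix H assume a: "(\<exists>p. H = F (Kf j p)) \<and> (\<forall>k\<le>0. H $$ k = z $$ k)"
    then obtain p' where H: "H = F (Kf j p')" by blast
    have "Kf j p' - x = 0"
    proof (rule F_nonpos_zero)
      fix n :: int assume "0 < n" then show "(Kf j p' - x) $$ n = 0" by (simp add: x_def Kf_pos)
    next
      fix k :: int assume "k \<le> 0"
      then show "F (Kf j p' - x) $$ k = 0" using a H Fx by (simp add: tri_diff[OF F_tri])
    qed
    then show "H = F x" using H by simp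
  qed
  moreover have "x $$ (- int j) = 1" by (simp add: x_def Kf_lead)
  moreover have "\<forall>n. (0 < n \<or> n < - int j) \<longrightarrow> x $$ n = 0" by (auto simp: x_def Kf_pos Kf_low)
  ultimately show ?thesis by blast
qed

end

lemma zpow_mult: "zpow k * (a :: 'a::comm_ring_1 fls) = fls_shift k a"
  unfolding zpow_def using fls_shifted_times_simps(2)[of "-(-k)" 1 a] by (simp add: fls_mult_one)

context kp
begin

definition kk :: "nat \<Rightarrow> 'a fls" where
  "kk j = (SOME x. kp_current D h j = act (PsiDO x) 1 \<and> x $$ (- int j) = 1 \<and> (\<forall>n. (0 < n \<or> n < - int j) \<longrightarrow> x $$ n = 0))"

lemma kk: "kp_current D h j = act (PsiDO (kk j)) 1" "kk j $$ (- int j) = 1"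
  "\<And>n. 0 < n \<Longrightarrow> kk j $$ n = 0" "\<And>n. n < - int j \<Longrightarrow> kk j $$ n = 0"
  using someI_ex[OF kp_repr[of j]] unfolding kk_def[symmetric] by blast+

definition Sx :: "'a fls \<Rightarrow> int \<Rightarrow> 'a fls" where
  "Sx a l = kk (nat (l + 1)) + (\<Sum>m\<in>{0..l}. fls_const (zcoeff a (- m)) * kk (nat (l - m)))"

lemma Sseries_act: "Sseries D h a l = act (PsiDO (Sx a l)) 1"
  by (simp add: Sseries_def Sx_def act_addP act_sumP act_constP kk(1))

lemma Sx_monic:
  assumes l: "-1 \<le> l"
  shows "monic_diff (PsiDO (Sx a l)) (l + 1)"
  unfolding monic_diff_def
proof (intro conjI allI impI)
  have n1: "int (nat (l + 1)) = l + 1" using l by simp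
  have "kk (nat (l + 1)) $$ (- (l + 1)) = 1" using kk(2)[of "nat (l + 1)"] n1 by simp
  moreover have "kk (nat (l - m)) $$ (- (l + 1)) = 0" if "m \<in> {0..l}" for m
    using kk(4)[of "- (l + 1)" "nat (l - m)"] that by simp
  ultimately show "pcoeff (PsiDO (Sx a l)) (l + 1) = 1"
    by (simp add: Sx_def fls_nth_sum)
next
  fix k assume k: "k < 0 \<or> l + 1 < k"
  have "kk (nat (l + 1)) $$ (- k) = 0"
    using k kk(3)[of "-k" "nat (l + 1)"] kk(4)[of "-k" "nat (l + 1)"] l by auto
  moreover have "kk (nat (l - m)) $$ (- k) = 0" if "m \<in> {0..l}" for m
    using k kk(3)[of "-k" "nat (l - m)"] kk(4)[of "-k" "nat (l - m)"] that by auto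
  ultimately show "pcoeff (PsiDO (Sx a l)) k = 0"
    by (simp add: Sx_def fls_nth_sum)
qed

lemma monic_tri:
  assumes m: "monic_diff P d"
  shows "tri (act P) (- d)"
  unfolding tri_def
proof (intro conjI allI impI)
  fix f g show "act P (f + g) = act P f + act P g" by (rule act_add_g)
next
  fix g :: "'a fls" assume nz: "g \<noteq> 0"
  have e: "act P g $$ k = Tp d g $$ k" if k: "k \<le> fls_subdegree g + - d" for k
  proof -
    have "act P g $$ k = (\<Sum>j\<in>{d}. pcoeff P j * (Tp j g $$ k))"
    proof (rule act_nth_sum)
      fix j assume "j \<notin> {d}"
      then have "j < d \<or> d < j" by auto
      then show "pcoeff P j * (Tp j g $$ k) = 0"
      proof
        assume "j < d" then have "Tp j g $$ k = 0" using k by (intro Tp_low') simp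
        then show ?thesis by simp
      next
        assume "d < j" then show ?thesis using m by (simp add: monic_diff_def)
      qed
    qed simp
    then show ?thesis using m by (simp add: monic_diff_def)
  qed
  show "act P g $$ k = 0" if "k < fls_subdegree g + - d" for k
    using e[of k] that tri_below[OF Tp_tri nz, of k d] by simp
  show "act P g $$ (fls_subdegree g + - d) = g $$ fls_subdegree g"
    using e[of "fls_subdegree g + - d"] tri_lead[OF Tp_tri nz, of d] by simp
qed

lemma main:
  assumes l: "-1 \<le> l" and S1: "inS D l h a" and S2: "inS D (l + int n) h a"
  shows "monic_diff (lax_map D h (Sseries D h a l)) (l + 1)
    \<and> monic_diff (lax_map D h (Sseries D h a (l + int n))) (l + int n + 1)
    \<and> ppow D (lax_map D h zvar) n
        = pmul D (pinv D (lax_map D h (Sseries D h a l))) (lax_map D h (Sseries D h a (l + int n)))"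
proof -
  define L1 where "L1 = lax_map D h (Sseries D h a l)"
  define L2 where "L2 = lax_map D h (Sseries D h a (l + int n))"
  define Lx where "Lx = lax_map D h zvar"
  have L1e: "L1 = PsiDO (Sx a l)" unfolding L1_def by (rule lax_map_eq) (simp add: Sseries_act)
  have L2e: "L2 = PsiDO (Sx a (l + int n))" unfolding L2_def by (rule lax_map_eq) (simp add: Sseries_act)
  have m1: "monic_diff L1 (l + 1)" using Sx_monic[OF l] L1e by simp
  have m2: "monic_diff L2 (l + int n + 1)" using Sx_monic[of "l + int n"] l L2e by simp
  have aL1: "act L1 1 = Sseries D h a l" unfolding L1_def by (rule lax_map_act)
  have aL2: "act L2 1 = Sseries D h a (l + int n)" unfolding L2_def by (rule lax_map_act)
  have aLx: "act Lx 1 = fls_shift 1 1"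
    unfolding Lx_def lax_map_act by (simp add: zvar_def fls_X_inv_conv_shift_1)
  have pw: "act (ppow D Lx m) 1 = fls_shift (int m) 1" for m
  proof (induction m)
    case 0 then show ?case by (simp add: act_pone)
  next
    case (Suc m)
    show ?case by (simp add: act_pmul aLx act_shift Suc.IH add.commute)
  qed
  have ser: "Sseries D h a (l + int n) = fls_shift (int n) (Sseries D h a l)"
  proof -
    have a1: "fls_shift l a = Sseries D h a l" and a2: "fls_shift (l + int n) a = Sseries D h a (l + int n)"
      using S1 S2 by (simp_all add: inS_def zpow_mult)
    have "fls_shift (int n) (fls_shift l a) = fls_shift (l + int n) a" by simp
    then show ?thesis using a1 a2 by simp
  qed
  have e1: "pmul D L1 (ppow D Lx n) = L2"
    by (rule act1_inj) (simp add: act_pmul pw act_shift aL1 aL2 ser)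
  have t1: "tri (act L1) (- (l + 1))" by (rule monic_tri[OF m1])
  obtain v where v: "act L1 v = 1" using tri_surj[OF t1] by blast
  define Q where "Q = lax_map D h v"
  have aQ: "act Q 1 = v" unfolding Q_def by (rule lax_map_act)
  have LQ: "pmul D L1 Q = pone"
    by (rule act1_inj) (simp add: act_pmul aQ v act_pone)
  have QL: "pmul D Q L1 = pone"
  proof (rule act1_inj)
    have "act L1 (act (pmul D Q L1) 1) = act (pmul D L1 Q) (act L1 1)"
      by (simp add: act_pmul)
    also have "\<dots> = act L1 (act pone 1)" by (simp add: LQ act_pone)
    finally show "act (pmul D Q L1) 1 = act pone 1" by (rule tri_inj[OF t1])
  qed
  have inv: "pinv D L1 = Q"
    unfolding pinv_def
  proof (rule the_equality)
    show "pmul D L1 Q = pone \<and> pmul D Q L1 = pone" using LQ QL by simp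
  next
    fix Q' assume "pmul D L1 Q' = pone \<and> pmul D Q' L1 = pone"
    then have "act L1 (act Q' 1) = act L1 (act Q 1)"
      using LQ by (metis act_pmul)
    then have "act Q' 1 = act Q 1" by (rule tri_inj[OF t1])
    then show "Q' = Q" by (rule act1_inj)
  qed
  have fin: "ppow D Lx n = pmul D Q L2"
  proof (rule act1_inj)
    have "act (pmul D Q L2) 1 = act (pmul D Q L1) (act (ppow D Lx n) 1)"
      by (simp add: e1[symmetric] act_pmul)
    then show "act (ppow D Lx n) 1 = act (pmul D Q L2) 1" by (simp add: QL act_pone)
  qed
  show ?thesis using m1 m2 fin inv by (simp add: L1_def L2_def Lx_def)
qed

end

theorem mainTheorem3:
  fixes D :: "'a::{comm_ring_1, ring_char_0} \<Rightarrow> 'a"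
    and h a :: "'a fls" and l :: int and n :: nat
  assumes "derivation D"
    and "-1 \<le> l" and "1 \<le> n"
    and "inS D l h a" and "inS D (l + int n) h a"
  shows "monic_diff (lax_map D h (Sseries D h a l)) (l + 1)
    \<and> monic_diff (lax_map D h (Sseries D h a (l + int n))) (l + int n + 1)
    \<and> ppow D (lax_map D h zvar) n
        = pmul D (pinv D (lax_map D h (Sseries D h a l))) (lax_map D h (Sseries D h a (l + int n)))"
proof -
  interpret kp D h using assms by unfold_locales (simp_all add: inS_def)
  show ?thesis using main assms by blast
qed

end
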